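(* Let $Y=(Y_{ij})$ be a $3\times 3$ real symmetric positive definite matrix which is Minkowski-reduced. Then for all $n\in\mathbb{R}^3$ we have ${}^t n\, Y\, n \ \ge\ \frac{1}{100}\,Y_{11}\,{}^t n\, n$.
   Context: A real symmetric positive definite $g\times g$ matrix $Y$ is Minkowski-reduced if (a) for all $j=1,\dots,g$ and all $v=(v_1,\dots,v_g)\in\mathbb{Z}^g$ with $\gcd(v_j,\dots,v_g)=1$ one has ${}^t v Y v\ge Y_{jj}$, and (b) for all $j=1,\dots,g-1$ one has $Y_{j,j+1}\ge 0$. *)

theory Defs
  imports "HOL-Analysis.Analysis"
begin

text \<open>A g x g real matrix is represented as Y :: nat \<Rightarrow> nat \<Rightarrow> real, with
  entries Y i j for indices 1 \<le> i, j \<le> g (values outside are irrelevant).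
  Vectors are functions nat \<Rightarrow> _ with indices 1..g.\<close>

definition qform :: "nat \<Rightarrow> (nat \<Rightarrow> nat \<Rightarrow> real) \<Rightarrow> (nat \<Rightarrow> real) \<Rightarrow> real" where
  "qform g Y v = (\<Sum>i=1..g. \<Sum>j=1..g. v i * Y i j * v j)"

definition sym_matrix :: "nat \<Rightarrow> (nat \<Rightarrow> nat \<Rightarrow> real) \<Rightarrow> bool" where
  "sym_matrix g Y \<longleftrightarrow> (\<forall>i\<in>{1..g}. \<forall>j\<in>{1..g}. Y i j = Y j i)"

definition pos_def :: "nat \<Rightarrow> (nat \<Rightarrow> nat \<Rightarrow> real) \<Rightarrow> bool" where
  "pos_def g Y \<longleftrightarrow> (\<forall>v. (\<exists>i\<in>{1..g}. v i \<noteq> 0) \<longrightarrow> qform g Y v > 0)"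

definition minkowski_reduced :: "nat \<Rightarrow> (nat \<Rightarrow> nat \<Rightarrow> real) \<Rightarrow> bool" where
  "minkowski_reduced g Y \<longleftrightarrow>
     sym_matrix g Y \<and> pos_def g Y \<and>
     (\<forall>j\<in>{1..g}. \<forall>v::nat \<Rightarrow> int. Gcd (v ` {j..g}) = 1 \<longrightarrow>
          qform g Y (\<lambda>i. of_int (v i)) \<ge> Y j j) \<and>
     (\<forall>j\<in>{1..g-1}. Y j (j+1) \<ge> 0)"

end

theory Submission
  imports Defs
begin
lemma fin1: fixes X Y Z :: real
  shows "((X-Y)^2+(X-Z)^2+(Y-Z)^2)/2 + X^2 \<ge> (X^2+Y^2+Z^2)/12"
proof -
  have e: "((X-Y)^2+(X-Z)^2+(Y-Z)^2)/2 + X^2 - (X^2+Y^2+Z^2)/12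
     = (Y-Z)^2/2 + 5/12*(Y-X-X/5)^2 + 5/12*(Z-X-X/5)^2 + (3/4 - 2/60)*X^2"
    by (simp add: power2_eq_square field_simps) 
  have "0 \<le> (Y-Z)^2/2 + 5/12*(Y-X-X/5)^2 + 5/12*(Z-X-X/5)^2 + (3/4 - 2/60)*X^2" by simp
  with e show ?thesis by linarith
qed
lemma fin: fixes X Y Z m :: real assumes "m = X \<or> m = Y \<or> m = Z"
  shows "((X-Y)^2+(X-Z)^2+(Y-Z)^2)/2 + m^2 \<ge> (X^2+Y^2+Z^2)/12"
  using assms
proof (elim disjE)
  assume m: "m = X"
  show ?thesis using fin1[of X Y Z] m by simp
next
  assume m: "m = Y"
  show ?thesis using fin1[of Y X Z] m by (simp add: power2_commute algebra_simps)
next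
  assume m: "m = Z"
  show ?thesis using fin1[of Z X Y] m by (simp add: power2_commute algebra_simps)
qed
lemma core: fixes X Y Z a b c d e f :: real
  assumes X: "0 \<le> X" and Yp: "0 \<le> Y" and Z: "0 \<le> Z" and a: "0 \<le> a" and ab: "a \<le> b" and bc: "b \<le> c"
    and d: "d \<ge> -a/2" and e: "e \<ge> -a/2" and f: "f \<ge> -b/2" and s: "2*(d+e+f) \<ge> -(a+b)"
  shows "a/100*(X^2+Y^2+Z^2) \<le> a*X^2+b*Y^2+c*Z^2+2*(d*X*Y+e*X*Z+f*Y*Z)"
proof -
  define m where "m = min X (min Y Z)"
  have mX: "m \<le> X" and mY: "m \<le> Y" and mZ: "m \<le> Z" and m0: "0 \<le> m" using X Yp Z by (auto simp: m_def)
  have mm: "m = X \<or> m = Y \<or> m = Z" by (auto simp: m_def min_def)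
  have base_eq: "a*X^2+b*Y^2+c*Z^2 - a*X*Y - a*X*Z - b*Y*Z
     = a/2*((X-Y)^2+(X-Z)^2+(Y-Z)^2) + (b-a)/2*(Y-Z)^2 + (b-a)/2*(Y^2+Z^2) + (c-b)*Z^2"
    by (simp add: power2_eq_square field_simps)
  have "0 \<le> (b-a)/2*(Y-Z)^2" "0 \<le> (b-a)/2*(Y^2+Z^2)" "0 \<le> (c-b)*Z^2" using ab bc by auto
  with base_eq have base: "a*X^2+b*Y^2+c*Z^2 - a*X*Y - a*X*Z - b*Y*Z \<ge> a/2*((X-Y)^2+(X-Z)^2+(Y-Z)^2)" by linarith
  have XY: "m^2 \<le> X*Y" using mult_mono[OF mX mY X m0] by (simp add: power2_eq_square)
  have XZ: "m^2 \<le> X*Z" using mult_mono[OF mX mZ X m0] by (simp add: power2_eq_square)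
  have YZ: "m^2 \<le> Y*Z" using mult_mono[OF mY mZ Yp m0] by (simp add: power2_eq_square)
  have t1: "(d+a/2)*m^2 \<le> (d+a/2)*(X*Y)" using XY d by (intro mult_left_mono) auto
  have t2: "(e+a/2)*m^2 \<le> (e+a/2)*(X*Z)" using XZ e by (intro mult_left_mono) auto
  have t3: "(f+b/2)*m^2 \<le> (f+b/2)*(Y*Z)" using YZ f by (intro mult_left_mono) auto
  have t4: "a/2*m^2 \<le> (d+a/2+e+a/2+f+b/2)*m^2" using s by (intro mult_right_mono) auto
  have cross: "a/2*m^2 \<le> (d+a/2)*(X*Y) + (e+a/2)*(X*Z) + (f+b/2)*(Y*Z)"
    using t1 t2 t3 t4 by (simp add: algebra_simps)
  have rhs: "a*X^2+b*Y^2+c*Z^2+2*(d*X*Y+e*X*Z+f*Y*Z) = 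
     (a*X^2+b*Y^2+c*Z^2 - a*X*Y - a*X*Z - b*Y*Z) + 2*((d+a/2)*(X*Y) + (e+a/2)*(X*Z) + (f+b/2)*(Y*Z))"
    by (simp add: algebra_simps)
  have fa: "a*((X^2+Y^2+Z^2)/12) \<le> a*(((X-Y)^2+(X-Z)^2+(Y-Z)^2)/2 + m^2)"
    using fin[OF mm] a by (intro mult_left_mono) auto
  have sq: "0 \<le> X^2+Y^2+Z^2" by simp
  have "a/100*(X^2+Y^2+Z^2) \<le> a*((X^2+Y^2+Z^2)/12)" using mult_nonneg_nonneg[OF a sq]
    by (simp add: field_simps)
  also note fa
  also have "a*(((X-Y)^2+(X-Z)^2+(Y-Z)^2)/2 + m^2) = a/2*((X-Y)^2+(X-Z)^2+(Y-Z)^2) + 2*(a/2*m^2)"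
    by (simp add: algebra_simps)
  also have "\<dots> \<le> (a*X^2+b*Y^2+c*Z^2 - a*X*Y - a*X*Z - b*Y*Z) + 2*((d+a/2)*(X*Y) + (e+a/2)*(X*Z) + (f+b/2)*(Y*Z))"
    using base cross by (intro add_mono) auto
  also note rhs[symmetric]
  finally show ?thesis .
qed

lemma sum13: "(\<Sum>i=1..3::nat. g i) = g 1 + g 2 + (g 3::real)"
proof -
  have "{1..3::nat} = {1,2,3}" by auto
  then show ?thesis by simp
qed

lemma q3: "qform 3 Y v = v 1 * Y 1 1 * v 1 + v 1 * Y 1 2 * v 2 + v 1 * Y 1 3 * v 3
  + v 2 * Y 2 1 * v 1 + v 2 * Y 2 2 * v 2 + v 2 * Y 2 3 * v 3
  + v 3 * Y 3 1 * v 1 + v 3 * Y 3 2 * v 2 + v 3 * Y 3 3 * v 3"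
  unfolding qform_def sum13 by simp

lemma sgnlem: fixes x :: real shows "(if x \<ge> 0 then 1 else -1) * \<bar>x\<bar> = x" by auto

theorem lemma2p2:
  fixes Y :: "nat \<Rightarrow> nat \<Rightarrow> real"
  assumes "sym_matrix 3 Y" and "pos_def 3 Y" and "minkowski_reduced 3 Y"
  shows "\<forall>n::nat \<Rightarrow> real. qform 3 Y n \<ge> (1/100) * Y 1 1 * (\<Sum>i=1..3. n i * n i)"
proof
  fix n :: "nat \<Rightarrow> real"
  have s21: "Y 2 1 = Y 1 2" and s31: "Y 3 1 = Y 1 3" and s32: "Y 3 2 = Y 2 3"
    using assms(1) unfolding sym_matrix_def by auto
  have s21': "Y 2 (Suc 0) = Y (Suc 0) 2" using s21 by simp
  have s31': "Y 3 (Suc 0) = Y (Suc 0) 3" using s31 by simp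
  have H: "\<And>j v. j \<in> {1..3} \<Longrightarrow> Gcd (v ` {j..3}) = 1 \<Longrightarrow> qform 3 Y (\<lambda>i. of_int (v i)) \<ge> Y j j"
    using assms(3) unfolding minkowski_reduced_def by auto
  have pos: "Y 1 1 > 0"
  proof -
    have "qform 3 Y (\<lambda>i. if i = 1 then 1 else 0) > 0" using assms(2) unfolding pos_def_def by force
    then show ?thesis by (simp add: q3)
  qed
  have r3: "{3..3::nat} = {3}" by auto
  have r2: "{2..3::nat} = {2,3}" by auto
  have r1: "{1..3::nat} = {1,2,3}" by auto
  define a where "a = Y 1 1" define b where "b = Y 2 2" define c where "c = Y 3 3"
  define d where "d = Y 1 2" define e where "e = Y 1 3" define f where "f = Y 2 3"
  have ab: "a \<le> b" using H[of 1 "\<lambda>i. if i = 2 then 1 else 0"] by (simp add: r1 q3 a_def b_def)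
  have bc: "b \<le> c" using H[of 2 "\<lambda>i. if i = 3 then 1 else 0"] by (simp add: r2 q3 b_def c_def)
  have d1: "d \<ge> -a/2" using H[of 2 "\<lambda>i. if i = 1 then 1 else if i = 2 then 1 else 0"]
    by (simp add: r2 q3 s21' a_def b_def d_def)
  have d2: "d \<le> a/2" using H[of 2 "\<lambda>i. if i = 1 then 1 else if i = 2 then -1 else 0"]
    by (simp add: r2 q3 s21' a_def b_def d_def)
  have e1: "e \<ge> -a/2" using H[of 3 "\<lambda>i. if i = 1 then 1 else if i = 3 then 1 else 0"]
    by (simp add: r3 q3 s31' a_def c_def e_def)
  have e2: "e \<le> a/2" using H[of 3 "\<lambda>i. if i = 1 then 1 else if i = 3 then -1 else 0"]
    by (simp add: r3 q3 s31' a_def c_def e_def)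
  have f1: "f \<ge> -b/2" using H[of 3 "\<lambda>i. if i = 2 then 1 else if i = 3 then 1 else 0"]
    by (simp add: r3 q3 s32 b_def c_def f_def)
  have f2: "f \<le> b/2" using H[of 3 "\<lambda>i. if i = 2 then 1 else if i = 3 then -1 else 0"]
    by (simp add: r3 q3 s32 b_def c_def f_def)
  have cmb: "\<And>\<sigma> \<tau>::int. \<sigma> \<in> {1,-1} \<Longrightarrow> \<tau> \<in> {1,-1} \<Longrightarrow> a + b + 2 * (of_int \<sigma>*d + of_int \<tau>*e + of_int \<sigma>* of_int \<tau>*f) \<ge> 0"
  proof -
    fix \<sigma> \<tau> :: int assume st: "\<sigma> \<in> {1,-1}" "\<tau> \<in> {1,-1}"
    have "qform 3 Y (\<lambda>i. of_int ((\<lambda>i. if i = 1 then 1 else if i = 2 then \<sigma> else \<tau>) i)) \<ge> Y 3 3"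
      using st by (intro H) (auto simp: r3)
    then show "a + b + 2 * (of_int \<sigma>*d + of_int \<tau>*e + of_int \<sigma>* of_int \<tau>*f) \<ge> 0"
      using st by (auto simp: q3 s21' s31' s32 a_def b_def c_def d_def e_def f_def algebra_simps)
  qed
  show "qform 3 Y n \<ge> (1/100) * Y 1 1 * (\<Sum>i=1..3. n i * n i)"
  proof -
    define ix :: int where "ix = (if n 1 \<ge> 0 then 1 else -1)"
    define iy :: int where "iy = (if n 2 \<ge> 0 then 1 else -1)"
    define iz :: int where "iz = (if n 3 \<ge> 0 then 1 else -1)"
    define sx :: real where "sx = of_int ix"
    define sy :: real where "sy = of_int iy"
    define sz :: real where "sz = of_int iz"
    have xs: "n 1 = sx * \<bar>n 1\<bar>" "n 2 = sy * \<bar>n 2\<bar>" "n 3 = sz * \<bar>n 3\<bar>"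
      by (auto simp: sx_def sy_def sz_def ix_def iy_def iz_def)
    have ixs: "ix \<in> {1,-1}" "iy \<in> {1,-1}" "iz \<in> {1,-1}" by (auto simp: ix_def iy_def iz_def)
    have sxx: "sx * sx = 1" "sy * sy = 1" "sz * sz = 1" using ixs by (auto simp: sx_def sy_def sz_def)
    have pxy: "sx * sy = 1 \<or> sx * sy = -1" using ixs by (auto simp: sx_def sy_def)
    have pxz: "sx * sz = 1 \<or> sx * sz = -1" using ixs by (auto simp: sx_def sz_def)
    have pyz: "sy * sz = 1 \<or> sy * sz = -1" using ixs by (auto simp: sy_def sz_def)
    have D: "sx * sy * d \<ge> -a/2" using pxy d1 d2 by auto
    have E: "sx * sz * e \<ge> -a/2" using pxz e1 e2 by auto
    have F: "sy * sz * f \<ge> -b/2" using pyz f1 f2 by auto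
    have im: "ix * iy \<in> {1,-1}" "ix * iz \<in> {1,-1}" using ixs by auto
    note C0 = cmb[OF im]
    have h3: "real_of_int (ix * iy) * real_of_int (ix * iz) = sy * sz"
    proof -
      have "real_of_int (ix * iy) * real_of_int (ix * iz) = (sx * sx) * (sy * sz)" by (simp add: sx_def sy_def sz_def algebra_simps)
      then show ?thesis using sxx by simp
    qed
    have h1: "real_of_int (ix * iy) = sx * sy" by (simp add: sx_def sy_def)
    have h2: "real_of_int (ix * iz) = sx * sz" by (simp add: sx_def sz_def)
    have h4: "sx * sy * (sx * sz) = sy * sz"
    proof -
      have "sx * sy * (sx * sz) = (sx * sx) * (sy * sz)" by (simp add: algebra_simps)
      then show ?thesis using sxx by simp
    qed
    have S: "2 * (sx * sy * d + sx * sz * e + sy * sz * f) \<ge> -(a+b)" using C0 unfolding h1 h2 h4 by linarith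
    have a0: "0 \<le> a" using pos a_def by simp
    note K = core[OF abs_ge_zero abs_ge_zero abs_ge_zero a0 ab bc D E F S, of "n 1" "n 2" "n 3"]
    have L: "a/100 * (\<bar>n 1\<bar>^2+\<bar>n 2\<bar>^2+\<bar>n 3\<bar>^2) = (1/100) * Y 1 1 * (\<Sum>i=1..3. n i * n i)"
      unfolding sum13 by (simp add: a_def power2_eq_square)
    have R: "a*\<bar>n 1\<bar>^2+b*\<bar>n 2\<bar>^2+c*\<bar>n 3\<bar>^2+2 * (sx * sy * d*\<bar>n 1\<bar>*\<bar>n 2\<bar>+sx * sz * e*\<bar>n 1\<bar>*\<bar>n 3\<bar>+sy * sz * f*\<bar>n 2\<bar>*\<bar>n 3\<bar>)
       = a * n 1^2+b * n 2^2+c * n 3^2+2 * (d * (sx*\<bar>n 1\<bar>) * (sy*\<bar>n 2\<bar>)+e * (sx*\<bar>n 1\<bar>) * (sz*\<bar>n 3\<bar>)+f * (sy*\<bar>n 2\<bar>) * (sz*\<bar>n 3\<bar>))"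
      by (simp add: algebra_simps)
    also have "\<dots> = a * n 1^2+b * n 2^2+c * n 3^2+2 * (d * n 1 * n 2+e * n 1 * n 3+f * n 2 * n 3)"
      using xs by simp
    also have "\<dots> = qform 3 Y n"
      by (simp add: q3 s21' s31' s32 a_def b_def c_def d_def e_def f_def power2_eq_square algebra_simps)
    finally show ?thesis using K L by simp
  qed
qed
end
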